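(* Let $k\geq 29$ and let $Q$ be the graph constructed below. Then $|V(Q)|=2k+1$ and $Q$ has no Hamiltonian path.
   Context: Fix an integer $k\geq 29$ and set $l=2\lfloor (k-12)/17\rfloor$, $m=\lfloor (2k-l+1)/8\rfloor$, $r=2k+1-l-8m$ (so $r\in\{1,3,5,7\}$). Let $H$ be the graph with vertex set $\{u,v,a,b,c,d,e,f\}$ and edge set $\{ub,ud,vc,ve,ab,ac,fd,fe,bc,ce,ed,db\}$. Take $m$ disjoint copies $H_1,\ldots,H_m$ of $H$, and let $u_i,v_i$ be the vertices of $H_i$ corresponding to $u,v$. Let $U=\{u_i,v_i:1\leq i\leq m\}$ and let $R$ be a set of $r$ new vertices. Let $T$ be the graph obtained from the disjoint union $H_1\cup\cdots\cup H_m$ by adding the vertices of $R$ and joining every pair of distinct vertices of $U\cup R$ by an edge (so $U\cup R$ becomes a clique). Let $L$ be a complete graph on $l$ vertices, and let $Q=L+T$ be the join of $L$ and $T$ (every vertex of $L$ adjacent to every vertex of $T$). *)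

theory Defs
  imports Main
begin

definition l_par :: "nat \<Rightarrow> nat" where
  "l_par k = 2 * ((k - 12) div 17)"
definition m_par :: "nat \<Rightarrow> nat" where
  "m_par k = (2 * k - l_par k + 1) div 8"
definition r_par :: "nat \<Rightarrow> nat" where
  "r_par k = 2 * k + 1 - l_par k - 8 * m_par k"

datatype hvert = Hu | Hv | Ha | Hb | Hc | Hd | He | Hf

definition H_edges :: "(hvert \<times> hvert) set" where
  "H_edges = {(Hu,Hb),(Hu,Hd),(Hv,Hc),(Hv,He),(Ha,Hb),(Ha,Hc),(Hf,Hd),(Hf,He),
              (Hb,Hc),(Hc,He),(He,Hd),(Hd,Hb)}"

definition H_adj :: "hvert \<Rightarrow> hvert \<Rightarrow> bool" where
  "H_adj x y \<longleftrightarrow> (x, y) \<in> H_edges \<or> (y, x) \<in> H_edges"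

text \<open>Vertices of Q: LV i (the clique L), RV i (the set R), HV i h (vertex h of copy H_i).
  Copies are indexed 0..m-1.\<close>
datatype qvert = LV nat | RV nat | HV nat hvert

definition Q_verts :: "nat \<Rightarrow> qvert set" where
  "Q_verts k = LV ` {..<l_par k} \<union> RV ` {..<r_par k} \<union> {HV i h | i h. i < m_par k}"

fun is_L :: "qvert \<Rightarrow> bool" where
  "is_L (LV _) = True" | "is_L _ = False"

fun in_UR :: "qvert \<Rightarrow> bool" where
  "in_UR (RV _) = True"
| "in_UR (HV _ h) = (h = Hu \<or> h = Hv)"
| "in_UR (LV _) = False"

fun copy_edge :: "qvert \<Rightarrow> qvert \<Rightarrow> bool" where
  "copy_edge (HV i x) (HV j y) = (i = j \<and> H_adj x y)"
| "copy_edge _ _ = False"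

definition Q_adj :: "nat \<Rightarrow> qvert \<Rightarrow> qvert \<Rightarrow> bool" where
  "Q_adj k x y \<longleftrightarrow> x \<in> Q_verts k \<and> y \<in> Q_verts k \<and> x \<noteq> y \<and>
     (is_L x \<or> is_L y \<or> copy_edge x y \<or> (in_UR x \<and> in_UR y))"

definition has_ham_path :: "'a set \<Rightarrow> ('a \<Rightarrow> 'a \<Rightarrow> bool) \<Rightarrow> bool" where
  "has_ham_path V adj \<longleftrightarrow> (\<exists>p. distinct p \<and> set p = V \<and>
     (\<forall>i. Suc i < length p \<longrightarrow> adj (p ! i) (p ! Suc i)))"

end

theory Submission
  imports Defs
begin

lemma H_adj_simps:
  "H_adj Hu y \<longleftrightarrow> y = Hb \<or> y = Hd"
  "H_adj Hv y \<longleftrightarrow> y = Hc \<or> y = He"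
  "H_adj Ha y \<longleftrightarrow> y = Hb \<or> y = Hc"
  "H_adj Hf y \<longleftrightarrow> y = Hd \<or> y = He"
  "H_adj Hb y \<longleftrightarrow> y = Hu \<or> y = Ha \<or> y = Hc \<or> y = Hd"
  "H_adj Hc y \<longleftrightarrow> y = Hv \<or> y = Ha \<or> y = Hb \<or> y = He"
  "H_adj Hd y \<longleftrightarrow> y = Hu \<or> y = Hf \<or> y = He \<or> y = Hb"
  "H_adj He y \<longleftrightarrow> y = Hv \<or> y = Hf \<or> y = Hc \<or> y = Hd"
  by (cases y; auto simp: H_adj_def H_edges_def)+

lemma H_adj_sym: "H_adj x y \<Longrightarrow> H_adj y x"
  unfolding H_adj_def by auto

lemma t1: assumes "H_adj Hu x0" "H_adj x0 x1" "H_adj x1 x2" "H_adj x2 x3" "H_adj x3 x4" "H_adj x4 x5"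
  "H_adj x5 Hv" "distinct [x0,x1,x2,x3,x4,x5]" "set [x0,x1,x2,x3,x4,x5] \<inter> {Hu,Hv} = {}"
  shows False
  using assms by (auto simp: H_adj_simps)

lemma no_seq_fun:
  assumes y: "y0 = Hu \<and> y6 = Hv \<or> y0 = Hv \<and> y6 = Hu"
  and inn: "\<And>t. t \<le> 5 \<Longrightarrow> x t \<noteq> Hu \<and> x t \<noteq> Hv"
  and inj: "\<And>t t'. t \<le> 5 \<Longrightarrow> t' \<le> 5 \<Longrightarrow> t \<noteq> t' \<Longrightarrow> x t \<noteq> x t'"
  and ch: "\<And>t. t < 5 \<Longrightarrow> H_adj (x t) (x (Suc t))"
  and e0: "H_adj y0 (x 0)" and e6: "H_adj (x 5) y6"
  shows False
proof -
  have d: "distinct [x 0, x 1, x 2, x 3, x 4, x 5]" by (simp add: inj)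
  have d2: "distinct [x 5, x 4, x 3, x 2, x 1, x 0]" using d by auto
  have s: "set [x 0, x 1, x 2, x 3, x 4, x 5] \<inter> {Hu,Hv} = {}"
    using inn[of 0] inn[of 1] inn[of 2] inn[of 3] inn[of 4] inn[of 5] by auto
  have s2: "set [x 5, x 4, x 3, x 2, x 1, x 0] \<inter> {Hu,Hv} = {}" using s by auto
  have c: "H_adj (x 0) (x 1)" "H_adj (x 1) (x 2)" "H_adj (x 2) (x 3)" "H_adj (x 3) (x 4)" "H_adj (x 4) (x 5)"
    using ch[of 0] ch[of 1] ch[of 2] ch[of 3] ch[of 4] by (simp_all add: numeral_eq_Suc)
  from y show False
  proof
    assume "y0 = Hu \<and> y6 = Hv"
    then show False using t1[OF _ c _ d s] e0 e6 by auto
  next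
    assume yy: "y0 = Hv \<and> y6 = Hu"
    show False
      using t1[OF _ H_adj_sym[OF c(5)] H_adj_sym[OF c(4)] H_adj_sym[OF c(3)] H_adj_sym[OF c(2)]
                H_adj_sym[OF c(1)] _ d2 s2] e0 e6 yy H_adj_sym by auto
  qed
qed

lemma arith: assumes "k \<ge> 29" shows "l_par k + r_par k + 8 * m_par k = 2*k+1" "2 * l_par k + 2 < m_par k"
proof -
  define q where "q = (k-12) div 17"
  have q1: "17 * q \<le> k - 12" unfolding q_def by simp
  have l: "l_par k = 2*q" unfolding l_par_def q_def by simp
  define m where "m = m_par k"
  have m: "m = (2*k - 2*q + 1) div 8" unfolding m_def m_par_def l by simp
  have m1: "8*m \<le> 2*k - 2*q + 1" unfolding m by simp
  have m2: "2*k - 2*q + 1 < 8*m + 8" unfolding m by simp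
  show "l_par k + r_par k + 8 * m_par k = 2*k+1" unfolding r_par_def m_def[symmetric] l using q1 m1 assms by linarith
  show "2 * l_par k + 2 < m_par k" unfolding m_def[symmetric] l using q1 m2 assms by linarith
qed

lemma hvert_univ: "(UNIV::hvert set) = {Hu,Hv,Ha,Hb,Hc,Hd,He,Hf}"
  by (auto intro: hvert.exhaust)

lemma card_Q: assumes "k \<ge> 29" shows "card (Q_verts k) = 2 * k + 1"
proof -
  let ?l = "l_par k" and ?r = "r_par k" and ?m = "m_par k"
  have H: "{HV i h | i h. i < ?m} = (\<lambda>(i,h). HV i h) ` ({..<?m} \<times> UNIV)" by auto
  have cH: "card {HV i h | i h. i < ?m} = ?m * 8"
    unfolding H by (subst card_image) (auto simp: inj_on_def card_cartesian_product hvert_univ)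
  have cL: "card (LV ` {..<?l}) = ?l" by (simp add: card_image inj_on_def)
  have cR: "card (RV ` {..<?r}) = ?r" by (simp add: card_image inj_on_def)
  have fH: "finite {HV i h | i h. i < ?m}" unfolding H by (rule finite_imageI) (simp add: hvert_univ)
  have "card (Q_verts k) = card (LV ` {..<?l} \<union> RV ` {..<?r}) + card {HV i h | i h. i < ?m}"
    unfolding Q_verts_def by (rule card_Un_disjoint) (use fH in auto)
  also have "card (LV ` {..<?l} \<union> RV ` {..<?r}) = ?l + ?r"
    by (subst card_Un_disjoint) (auto simp: cL cR)
  finally show ?thesis using cH arith[OF assms] by simp
qed


fun hv :: "qvert \<Rightarrow> hvert" where
  "hv (HV i h) = h" | "hv _ = Hu"

definition good :: "qvert list \<Rightarrow> nat \<Rightarrow> nat \<Rightarrow> bool" where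
  "good p i j \<longleftrightarrow> j < length p \<and> (\<exists>h. h \<noteq> Hu \<and> h \<noteq> Hv \<and> p!j = HV i h) \<and>
     (j = 0 \<or> j = length p - 1 \<or> is_L (p!(j+1)) \<or> is_L (p!(j-1)))"

lemma block:
  assumes dist: "distinct p" and setp: "set p = Q_verts k"
  and adj: "\<forall>i. Suc i < length p \<longrightarrow> Q_adj k (p!i) (p!Suc i)" and im: "i < m_par k"
  and nogood: "\<forall>j. \<not> good p i j"
  shows False
proof -
  define n where "n = length p"
  define P where "P = {j. j < n \<and> (\<exists>h. h \<noteq> Hu \<and> h \<noteq> Hv \<and> p!j = HV i h)}"
  have N: "0 < j \<and> Suc j < n \<and> (\<exists>h'. p!(Suc j) = HV i h' \<and> H_adj h h') \<and> (\<exists>h'. p!(j-1) = HV i h' \<and> H_adj h' h)"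
    if j: "j < n" "h \<noteq> Hu" "h \<noteq> Hv" "p!j = HV i h" for j h
  proof -
    have ng: "j \<noteq> 0" "j \<noteq> n - 1" "\<not> is_L (p!(j+1))" "\<not> is_L (p!(j-1))"
      using nogood[rule_format, of j] j unfolding good_def n_def by auto
    have jn: "Suc j < n" using ng j by linarith
    have a1: "Q_adj k (p!j) (p!Suc j)" using adj jn n_def by auto
    have a2: "Q_adj k (p!(j-1)) (p!j)" using adj[rule_format, of "j-1"] ng j n_def by auto
    have "copy_edge (p!j) (p!Suc j)" using a1 ng j unfolding Q_adj_def by auto
    then have e1: "\<exists>h'. p!(Suc j) = HV i h' \<and> H_adj h h'" using j(4)
      by (cases "p!Suc j") auto
    have "copy_edge (p!(j-1)) (p!j)" using a2 ng j unfolding Q_adj_def by auto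
    then have e2: "\<exists>h'. p!(j-1) = HV i h' \<and> H_adj h' h" using j(4)
      by (cases "p!(j-1)") auto
    show ?thesis using e1 e2 jn ng by auto
  qed
  have nth_inj: "x = y" if "x < n" "y < n" "p!x = p!y" for x y
    using dist that nth_eq_iff_index_eq n_def by blast
  have finP: "finite P" unfolding P_def by simp
  have imgP: "(\<lambda>j. p!j) ` P = HV i ` {Ha,Hb,Hc,Hd,He,Hf}"
  proof
    show "(\<lambda>j. p!j) ` P \<subseteq> HV i ` {Ha,Hb,Hc,Hd,He,Hf}"
    proof
      fix x assume "x \<in> (\<lambda>j. p!j) ` P"
      then obtain j h where "x = HV i h" "h \<noteq> Hu" "h \<noteq> Hv" unfolding P_def by auto
      then show "x \<in> HV i ` {Ha,Hb,Hc,Hd,He,Hf}" by (cases h) auto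
    qed
    show "HV i ` {Ha,Hb,Hc,Hd,He,Hf} \<subseteq> (\<lambda>j. p!j) ` P"
    proof
      fix x assume x: "x \<in> HV i ` {Ha,Hb,Hc,Hd,He,Hf}"
      then have "x \<in> set p" using im setp unfolding Q_verts_def by auto
      then obtain j where "j < n" "p!j = x" unfolding n_def by (auto simp: in_set_conv_nth)
      then show "x \<in> (\<lambda>j. p!j) ` P" using x unfolding P_def by auto
    qed
  qed
  have "inj_on (\<lambda>j. p!j) P" unfolding inj_on_def P_def using nth_inj by auto
  then have cardP: "card P = 6" using imgP card_image[of "\<lambda>j. p!j" P]
    by (simp add: card_image inj_on_def)
  have Pne: "P \<noteq> {}" using cardP by auto
  define a where "a = Min P"
  define b where "b = Max P"
  have aP: "a \<in> P" and bP: "b \<in> P" using finP Pne a_def b_def by auto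
  have aMin: "a \<le> x" and bMax: "x \<le> b" if "x \<in> P" for x using finP that a_def b_def by auto
  have Pab: "P \<subseteq> {a..b}" using aMin bMax by auto
  have right: "p!(Suc j) \<in> {HV i Hu, HV i Hv} \<and> Suc j < n" if jP: "j \<in> P" and jP2: "Suc j \<notin> P" for j
  proof -
    obtain h where h: "j < n" "h \<noteq> Hu" "h \<noteq> Hv" "p!j = HV i h" using jP unfolding P_def by blast
    obtain h' where "p!(Suc j) = HV i h'" "Suc j < n" using N[OF h] by auto
    then show ?thesis using jP2 unfolding P_def by (cases h') auto
  qed
  have left: "p!(j-1) \<in> {HV i Hu, HV i Hv} \<and> j - 1 < n \<and> 0 < j" if jP: "j \<in> P" and jP2: "j - 1 \<notin> P" for j
  proof -
    obtain h where h: "j < n" "h \<noteq> Hu" "h \<noteq> Hv" "p!j = HV i h" using jP unfolding P_def by auto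
    obtain h' where "p!(j-1) = HV i h'" "0 < j" using N[OF h] by auto
    then show ?thesis using jP2 h(1) unfolding P_def by (cases h') auto
  qed
  have a0: "0 < a" using aP N unfolding P_def by blast
  have "a - 1 \<notin> P" using aMin a0 by force
  then have la: "p!(a-1) \<in> {HV i Hu, HV i Hv}" "a - 1 < n"
    using left[OF aP] by auto
  have "Suc b \<notin> P" using bMax by force
  then have rb: "p!(Suc b) \<in> {HV i Hu, HV i Hv}" "Suc b < n"
    using right[OF bP] by auto
  have three: False if "x < y" "y < z" "z < n" "p!x \<in> {HV i Hu, HV i Hv}"
      "p!y \<in> {HV i Hu, HV i Hv}" "p!z \<in> {HV i Hu, HV i Hv}" for x y z
  proof -
    have "p!x \<noteq> p!y" "p!y \<noteq> p!z" "p!x \<noteq> p!z" using nth_inj that by (metis less_trans order_less_irrefl)+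
    then show False using that by auto
  qed
  have interval: "q \<in> P" if "a \<le> q" "q \<le> b" for q
  proof (rule ccontr)
    assume qP: "q \<notin> P"
    define S where "S = {x\<in>P. x < q}"
    have "a \<in> S" using aP that qP unfolding S_def by (cases "a = q") auto
    then have Sne: "S \<noteq> {}" by auto
    have finS: "finite S" using finP unfolding S_def by simp
    define j where "j = Max S"
    have jS: "j \<in> P" "j < q" using Max_in[OF finS Sne] unfolding j_def S_def by auto
    have "Suc j \<notin> P"
    proof
      assume "Suc j \<in> P"
      moreover have "Suc j \<noteq> q" using qP \<open>Suc j \<in> P\<close> by auto
      ultimately have "Suc j \<in> S" using jS unfolding S_def by auto
      then show False using Max_ge[OF finS, of "Suc j"] j_def by auto
    qed
    from right[OF jS(1) this] have rj: "p!(Suc j) \<in> {HV i Hu, HV i Hv}" "Suc j < n" by auto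
    have "a - 1 < Suc j" using aMin[OF jS(1)] by linarith
    moreover have "Suc j < Suc b" using jS that by linarith
    ultimately show False using three[of "a-1" "Suc j" "Suc b"] la rj rb by auto
  qed
  have Peq: "P = {a..b}" using Pab interval by auto
  have b5: "b = a + 5" using cardP Peq aMin[OF bP] by simp
  define x where "x t = hv (p!(a+t))" for t
  have px: "p!(a+t) = HV i (x t) \<and> x t \<noteq> Hu \<and> x t \<noteq> Hv" if "t \<le> 5" for t
  proof -
    have "a + t \<in> P" using Peq b5 that by auto
    then obtain h where "h \<noteq> Hu" "h \<noteq> Hv" "p!(a+t) = HV i h" unfolding P_def by auto
    then show ?thesis unfolding x_def by auto
  qed
  have inn: "x t \<noteq> Hu \<and> x t \<noteq> Hv" if "t \<le> 5" for t using px[OF that] by auto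
  have injx: "x t \<noteq> x t'" if "t \<le> 5" "t' \<le> 5" "t \<noteq> t'" for t t'
  proof
    assume "x t = x t'"
    then have "p!(a+t) = p!(a+t')" using px that by metis
    moreover have "a + t < n" "a + t' < n" using rb b5 that by linarith+
    ultimately have "a + t = a + t'" using nth_inj by blast
    then show False using that by simp
  qed
  have ch: "H_adj (x t) (x (Suc t))" if "t < 5" for t
  proof -
    have t5: "t \<le> 5" "Suc t \<le> 5" using that by auto
    have "a + t < n" using rb b5 that by linarith
    with px[OF t5(1)] N obtain h' where "p!(Suc (a+t)) = HV i h'" "H_adj (x t) h'" by blast
    moreover have "p!(Suc (a+t)) = HV i (x (Suc t))" using px[OF t5(2)] by simp
    ultimately show ?thesis by simp
  qed
  have an: "a < n" using aP unfolding P_def by auto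
  obtain y0 where y0: "p!(a-1) = HV i y0" "H_adj y0 (x 0)"
    using N[of a "x 0"] px[of 0] an by auto
  have "a + 4 < n" using rb b5 by linarith
  then obtain y6 where y6: "p!(Suc (a+5)) = HV i y6" "H_adj (x 5) y6"
    using N[of "a+5" "x 5"] px[of 5] rb b5 by auto
  have yy0: "y0 = Hu \<or> y0 = Hv" using la y0 by auto
  have yy6: "y6 = Hu \<or> y6 = Hv" using rb y6 b5 by auto
  have "p!(a-1) \<noteq> p!(Suc (a+5))"
  proof
    assume "p!(a-1) = p!(Suc (a+5))"
    then have "a - 1 = Suc (a+5)" using nth_inj la rb b5 by auto
    then show False using a0 by linarith
  qed
  then have "y0 \<noteq> y6" using y0 y6 by auto
  then have "y0 = Hu \<and> y6 = Hv \<or> y0 = Hv \<and> y6 = Hu" using yy0 yy6 by auto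
  from no_seq_fun[OF this inn injx ch y0(2) y6(2)] show False by auto
qed

theorem lemma5p4:
  fixes k :: nat
  assumes "k \<ge> 29"
  shows "card (Q_verts k) = 2 * k + 1 \<and> \<not> has_ham_path (Q_verts k) (Q_adj k)"
proof
  show "card (Q_verts k) = 2 * k + 1" using card_Q[OF assms] .
  show "\<not> has_ham_path (Q_verts k) (Q_adj k)"
  proof
    assume "has_ham_path (Q_verts k) (Q_adj k)"
    then obtain p where dist: "distinct p" and setp: "set p = Q_verts k"
      and adj: "\<forall>i. Suc i < length p \<longrightarrow> Q_adj k (p!i) (p!Suc i)"
      unfolding has_ham_path_def by blast
    define n where "n = length p"
    define l where "l = l_par k"
    define m where "m = m_par k"
    have ex: "\<exists>j. good p i j" if "i < m" for i
      using block[OF dist setp adj, of i] that m_def by blast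
    then obtain w where w: "\<And>i. i < m \<Longrightarrow> good p i (w i)" by metis
    define Lpos where "Lpos = {q. q < n \<and> is_L (p!q)}"
    define J where "J = {0, n - 1} \<union> (\<lambda>q. q - 1) ` Lpos \<union> Suc ` Lpos"
    have finL: "finite Lpos" unfolding Lpos_def by simp
    have "inj_on (\<lambda>q. p!q) Lpos" using dist unfolding inj_on_def Lpos_def n_def
      by (simp add: nth_eq_iff_index_eq)
    then have "card Lpos = card ((\<lambda>q. p!q) ` Lpos)" by (simp add: card_image)
    also have "\<dots> \<le> card (LV ` {..<l})"
    proof (rule card_mono)
      show "finite (LV ` {..<l})" by simp
      show "(\<lambda>q. p!q) ` Lpos \<subseteq> LV ` {..<l}"
      proof
        fix x assume "x \<in> (\<lambda>q. p!q) ` Lpos"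
        then obtain q where q: "q < n" "is_L (p!q)" "x = p!q" unfolding Lpos_def by auto
        then have "x \<in> Q_verts k" using setp n_def nth_mem by metis
        then show "x \<in> LV ` {..<l}" using q unfolding Q_verts_def l_def by auto
      qed
    qed
    also have "\<dots> \<le> l" using card_image_le[of "{..<l}" LV] by simp
    finally have cL: "card Lpos \<le> l" .
    have c2: "card {0::nat, n - 1} \<le> 2" by (cases "n - 1 = 0") auto
    have "card J \<le> card ({0, n - 1} \<union> (\<lambda>q. q - 1) ` Lpos) + card (Suc ` Lpos)"
      unfolding J_def by (rule card_Un_le)
    also have "\<dots> \<le> card {0, n - 1} + card ((\<lambda>q. q - 1) ` Lpos) + card (Suc ` Lpos)"
      by (rule add_mono[OF card_Un_le order_refl])
    also have "\<dots> \<le> 2 + l + l"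
      using card_image_le[OF finL, of "\<lambda>q. q - 1"] card_image_le[OF finL, of Suc] cL c2
      by linarith
    finally have cJ: "card J \<le> 2 * l + 2" by simp
    have wJ: "w ` {..<m} \<subseteq> J"
    proof
      fix y assume "y \<in> w ` {..<m}"
      then obtain i where i: "i < m" "y = w i" by auto
      have g: "good p i y" using w i by simp
      then have yn: "y < n" unfolding good_def n_def by simp
      consider "y = 0" | "y = n - 1" | "is_L (p!(y+1))" | "is_L (p!(y-1))"
        using g unfolding good_def n_def by blast
      then show "y \<in> J"
      proof cases
        case 3
        show ?thesis
        proof (cases "y = n - 1")
          case False
          then have "y + 1 \<in> Lpos" using 3 yn unfolding Lpos_def by auto
          then have "(y+1) - 1 \<in> (\<lambda>q. q - 1) ` Lpos" by blast
          then show ?thesis unfolding J_def by simp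
        qed (simp add: J_def)
      next
        case 4
        show ?thesis
        proof (cases "y = 0")
          case False
          then have "y - 1 \<in> Lpos" using 4 yn unfolding Lpos_def by auto
          then have "Suc (y - 1) \<in> Suc ` Lpos" by blast
          then show ?thesis unfolding J_def using False by simp
        qed (simp add: J_def)
      qed (auto simp: J_def)
    qed
    have "inj_on w {..<m}"
    proof (rule inj_onI)
      fix i i' assume "i \<in> {..<m}" "i' \<in> {..<m}" "w i = w i'"
      then have "good p i (w i)" "good p i' (w i)" using w by (metis lessThan_iff)+
      then show "i = i'" unfolding good_def by auto
    qed
    then have "m = card (w ` {..<m})" by (simp add: card_image)
    also have "\<dots> \<le> card J" by (rule card_mono[OF _ wJ]) (simp add: J_def finL)
    finally have "m \<le> 2 * l + 2" using cJ by simp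
    then show False using arith(2)[OF assms] l_def m_def by simp
  qed
qed

end
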